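(* Let $\mu_1,\mu_2:\mathbb C[x]\to\mathbb C$ be linear functionals with $\mu_i(1)=1$, and let $\mu:=\mu_1\boxplus\mu_2$ be their free convolution. Let $\tau_1,\tau_2,\tau$ be the inverse Markov–Krein transforms of $\mu_1,\mu_2,\mu$, respectively. Then $$(\mu_1,\mu_1-\tau_1)\boxplus(\mu_2,\mu_2-\tau_2)=(\mu,\mu-\tau),$$ where the left-hand side is the infinitesimal free convolution.
   Context: With $G_\nu(z)=\sum_{n\ge0}\nu(x^n)z^{-n-1}$ as a formal series, the inverse Markov–Krein transform of a linear functional $\nu$ on $\mathbb C[x]$ with $\nu(1)=1$ is the linear functional $\tau$ on $\mathbb C[x]$ determined by $\frac{d}{dz}G_\nu(z)=-G_\tau(z)G_\nu(z)$ (so $\tau(1)=1$). The free convolution $\mu_1\boxplus\mu_2$ is the distribution ($x^n\mapsto\varphi((b_1+b_2)^n)$) of $b_1+b_2$ for free elements $b_1,b_2$ with distributions $\mu_1,\mu_2$ in a ncps. An infinitesimal ncps is $(\mathcal C,\varphi,\varphi')$ with $\mathcal C$ unital, $\varphi(1)=1$, $\varphi'(1)=0$; unital subalgebras $(\mathcal C_i)$ are infinitesimally free if for $i_1\ne\cdots\ne i_n$ and $c_l\in\mathcal C_{i_l}$ with $\varphi(c_l)=0$: $\varphi(c_1\cdots c_n)=0$ and $\varphi'(c_1\cdots c_n)=\varphi(c_1c_n)\varphi(c_2c_{n-1})\cdots\varphi'(c_{(n+1)/2})$ if $n$ odd and $i_1=i_n,i_2=i_{n-1},\dots$, else $0$.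 An infinitesimal distribution is a pair $(\nu,\nu')$ of linear functionals on $\mathbb C[x]$ with $\nu(1)=1$, $\nu'(1)=0$; that of $b$ is $(x^n\mapsto\varphi(b^n),x^n\mapsto\varphi'(b^n))$. The infinitesimal free convolution $(\nu_1,\nu_1')\boxplus(\nu_2,\nu_2')$ is the infinitesimal distribution of $b_1+b_2$ where $b_1,b_2$ generate infinitesimally free unital subalgebras and have infinitesimal distributions $(\nu_i,\nu_i')$ (well defined). *)

theory Defs
  imports Complex_Main
begin

text \<open>Linear functionals nu on C[x] are represented by their moment sequences
  n \<mapsto> nu(x^n), of type nat \<Rightarrow> complex.\<close>

text \<open>A unital complex algebra is a ring_1 type 'a together with a unital ring
  homomorphism sc from the complex numbers into the centre of 'a (the scalars).\<close>

definition complex_alg :: "(complex \<Rightarrow> 'a::ring_1) \<Rightarrow> bool" where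
  "complex_alg sc \<longleftrightarrow>
     sc 1 = 1 \<and> (\<forall>a b. sc (a + b) = sc a + sc b) \<and> (\<forall>a b. sc (a * b) = sc a * sc b)
     \<and> (\<forall>a x. sc a * x = x * sc a)"

definition C_linear :: "(complex \<Rightarrow> 'a::ring_1) \<Rightarrow> ('a \<Rightarrow> complex) \<Rightarrow> bool" where
  "C_linear sc f \<longleftrightarrow> (\<forall>x y. f (x + y) = f x + f y) \<and> (\<forall>a x. f (sc a * x) = a * f x)"

definition inf_ncps :: "(complex \<Rightarrow> 'a::ring_1) \<Rightarrow> ('a \<Rightarrow> complex) \<Rightarrow> ('a \<Rightarrow> complex) \<Rightarrow> bool" where
  "inf_ncps sc \<phi> \<phi>' \<longleftrightarrow> complex_alg sc \<and> C_linear sc \<phi> \<and> C_linear sc \<phi>' \<and> \<phi> 1 = 1 \<and> \<phi>' 1 = 0"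

definition alg_gen :: "(complex \<Rightarrow> 'a::ring_1) \<Rightarrow> 'a \<Rightarrow> 'a set" where
  "alg_gen sc b = {(\<Sum>k<N. sc (c k) * b ^ k) | c N. True}"

definition inf_free :: "(complex \<Rightarrow> 'a::ring_1) \<Rightarrow> ('a \<Rightarrow> complex) \<Rightarrow> ('a \<Rightarrow> complex)
    \<Rightarrow> 'i set \<Rightarrow> ('i \<Rightarrow> 'a set) \<Rightarrow> bool" where
  "inf_free sc \<phi> \<phi>' I A \<longleftrightarrow>
     (\<forall>n \<ge> 1. \<forall>(\<iota>::nat \<Rightarrow> 'i) (c::nat \<Rightarrow> 'a).
        (\<forall>l<n. \<iota> l \<in> I \<and> c l \<in> A (\<iota> l) \<and> \<phi> (c l) = 0) \<and>
        (\<forall>l. Suc l < n \<longrightarrow> \<iota> l \<noteq> \<iota> (Suc l)) \<longrightarrow>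
          \<phi> (prod_list (map c [0..<n])) = 0 \<and>
          \<phi>' (prod_list (map c [0..<n])) =
            (if odd n \<and> (\<forall>l<n. \<iota> l = \<iota> (n - 1 - l))
             then (\<Prod>l<n div 2. \<phi> (c l * c (n - 1 - l))) * \<phi>' (c (n div 2))
             else 0))"

definition distr :: "('a::ring_1 \<Rightarrow> complex) \<Rightarrow> 'a \<Rightarrow> nat \<Rightarrow> complex" where
  "distr f b = (\<lambda>n. f (b ^ n))"

text \<open>tau is the inverse Markov-Krein transform of nu: comparing coefficients of
  z^(-n-2) in  d/dz G_nu = - G_tau G_nu  gives (n+1) nu_n = sum_{j+k=n} tau_j nu_k.\<close>
definition is_inv_MK :: "(nat \<Rightarrow> complex) \<Rightarrow> (nat \<Rightarrow> complex) \<Rightarrow> bool" where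
  "is_inv_MK \<nu> \<tau> \<longleftrightarrow> (\<forall>n. of_nat (n + 1) * \<nu> n = (\<Sum>j\<le>n. \<tau> j * \<nu> (n - j)))"

end

theory Submission
  imports Defs "HOL-Computational_Algebra.Formal_Power_Series"
begin

unbundle fps_syntax

lemma zpp: fixes a :: "'a::ring_1 fps" shows "a$0 = 0 \<Longrightarrow> n < k \<Longrightarrow> (a ^ k)$n = 0"
  using startsby_zero_power_prefix[of a k] by simp

lemma ca_add: "complex_alg sc \<Longrightarrow> sc (a + b) = sc a + sc b"
  unfolding complex_alg_def by (elim conjE allE) assumption
lemma ca_0: "complex_alg sc \<Longrightarrow> sc 0 = 0"
proof -
  assume "complex_alg sc"
  then have "sc (0 + 0) = sc 0 + sc 0" by (rule ca_add)
  then show ?thesis by simp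
qed
lemma ca_mult: "complex_alg sc \<Longrightarrow> sc (a * b) = sc a * sc b"
  unfolding complex_alg_def by (elim conjE allE) assumption
lemma ca_1: "complex_alg sc \<Longrightarrow> sc 1 = 1"
  unfolding complex_alg_def by (elim conjE allE) assumption
lemma ca_comm: "complex_alg sc \<Longrightarrow> sc a * x = x * sc a"
  unfolding complex_alg_def by (elim conjE allE) assumption
lemma ca_uminus: "complex_alg sc \<Longrightarrow> sc (- a) = - sc a"
proof -
  assume h: "complex_alg sc"
  have "sc (- a) + sc a = 0" using ca_add[OF h, of "-a" a] ca_0[OF h] by simp
  then show ?thesis by (simp add: eq_neg_iff_add_eq_0)
qed
lemma ca_diff: "complex_alg sc \<Longrightarrow> sc (a - b) = sc a - sc b"
  using ca_add[of sc a "-b"] ca_uminus[of sc b] by simp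
lemma ca_sum: "complex_alg sc \<Longrightarrow> sc (sum f A) = (\<Sum>i\<in>A. sc (f i))"
  by (induction A rule: infinite_finite_induct) (auto simp: ca_0 ca_add)

lemma cl_add: "C_linear sc f \<Longrightarrow> f (x + y) = f x + f y"
  unfolding C_linear_def by (elim conjE allE) assumption
lemma cl_0: "C_linear sc f \<Longrightarrow> f 0 = 0"
  using cl_add[of sc f 0 0] by simp
lemma cl_scal: "C_linear sc f \<Longrightarrow> f (sc a * x) = a * f x"
  unfolding C_linear_def by (elim conjE allE) assumption
lemma cl_uminus: "C_linear sc f \<Longrightarrow> f (- x) = - f x"
proof -
  assume h: "C_linear sc f"
  have "f (- x) + f x = 0" using cl_add[OF h, of "-x" x] cl_0[OF h] by simp
  then show ?thesis by (simp add: eq_neg_iff_add_eq_0)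
qed
lemma cl_diff: "C_linear sc f \<Longrightarrow> f (x - y) = f x - f y"
  using cl_add[of sc f x "-y"] cl_uminus[of sc f y] by simp
lemma cl_sum: "C_linear sc f \<Longrightarrow> f (sum g A) = (\<Sum>i\<in>A. f (g i))"
  by (induction A rule: infinite_finite_induct) (auto simp: cl_0 cl_add)

section \<open>Embedding of scalar series\<close>

definition E :: "(complex \<Rightarrow> 'a::ring_1) \<Rightarrow> complex fps \<Rightarrow> 'a fps" where
  "E sc f = Abs_fps (\<lambda>n. sc (f$n))"

definition Phi :: "('a::ring_1 \<Rightarrow> complex) \<Rightarrow> 'a fps \<Rightarrow> complex fps" where
  "Phi g F = Abs_fps (\<lambda>n. g (F$n))"

lemma E_nth[simp]: "E sc f $ n = sc (f$n)" by (simp add: E_def)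
lemma Phi_nth[simp]: "Phi g F $ n = g (F$n)" by (simp add: Phi_def)

context fixes sc :: "complex \<Rightarrow> 'a::ring_1" assumes ca: "complex_alg sc"
begin

lemma E_add: "E sc (f + g) = E sc f + E sc g"
  by (simp add: fps_eq_iff ca_add[OF ca])
lemma E_diff: "E sc (f - g) = E sc f - E sc g"
  by (simp add: fps_eq_iff ca_diff[OF ca])
lemma E_1: "E sc 1 = 1"
  by (simp add: fps_eq_iff ca_0[OF ca] ca_1[OF ca])
lemma E_mult: "E sc (f * g) = E sc f * E sc g"
  by (simp add: fps_eq_iff fps_mult_nth ca_sum[OF ca] ca_mult[OF ca])
lemma E_comm: "E sc f * G = G * E sc f"
proof -
  have "(E sc f * G) $ n = (G * E sc f) $ n" for n
  proof -
    have "(E sc f * G) $ n = (\<Sum>i=0..n. G$(n-i) * sc (f$i))"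
      by (simp add: fps_mult_nth ca_comm[OF ca])
    also have "\<dots> = (\<Sum>i=0..n. G$(n - (n + 0 - i)) * sc (f$(n + 0 - i)))"
      by (rule sum.atLeastAtMost_rev)
    also have "\<dots> = (G * E sc f) $ n"
      by (simp add: fps_mult_nth)
    finally show ?thesis .
  qed
  then show ?thesis by (simp add: fps_eq_iff)
qed

lemma Phi_add: "C_linear sc g \<Longrightarrow> Phi g (F + G) = Phi g F + Phi g G"
  by (simp add: fps_eq_iff cl_add)
lemma Phi_diff: "C_linear sc g \<Longrightarrow> Phi g (F - G) = Phi g F - Phi g G"
  by (simp add: fps_eq_iff cl_diff)
lemma Phi_E: "C_linear sc g \<Longrightarrow> Phi g (E sc f * F) = f * Phi g F"
  by (simp add: fps_eq_iff fps_mult_nth cl_sum cl_scal)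
lemma Phi_E_right: "C_linear sc g \<Longrightarrow> Phi g (F * E sc f) = f * Phi g F"
  by (simp add: Phi_E E_comm[symmetric])

end

section \<open>Geometric series\<close>

definition geom :: "'a::ring_1 fps \<Rightarrow> 'a fps" where
  "geom T = Abs_fps (\<lambda>n. \<Sum>k=0..n. (T^k)$n)"

lemma geom_left:
  fixes T :: "'a::ring_1 fps" assumes T0: "T$0 = 0"
  shows "T * geom T = geom T - 1"
proof -
  have "(T * geom T) $ n = (geom T - 1) $ n" for n
  proof -
    have "(T * geom T) $ n = (\<Sum>j=0..n. T$j * (\<Sum>k=0..n-j. (T^k)$(n-j)))"
      by (simp add: fps_mult_nth geom_def)
    also have "\<dots> = (\<Sum>j=0..n. T$j * (\<Sum>k=0..n. (T^k)$(n-j)))"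
    proof (rule sum.cong[OF refl])
      fix j assume "j \<in> {0..n}"
      have "(\<Sum>k=0..n-j. (T^k)$(n-j)) = (\<Sum>k=0..n. (T^k)$(n-j))"
        by (rule sum.mono_neutral_left) (auto simp: zpp[OF T0])
      then show "T$j * (\<Sum>k=0..n-j. (T^k)$(n-j)) = T$j * (\<Sum>k=0..n. (T^k)$(n-j))" by simp
    qed
    also have "\<dots> = (\<Sum>k=0..n. \<Sum>j=0..n. T$j * (T^k)$(n-j))"
      unfolding sum_distrib_left by (rule sum.swap)
    also have "\<dots> = (\<Sum>k=0..n. (T^Suc k)$n)"
      by (simp add: fps_mult_nth)
    also have "\<dots> = (\<Sum>k=1..Suc n. (T^k)$n)"
      by (rule sum.reindex_bij_witness[where i="\<lambda>k. k - 1" and j="Suc"]) auto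
    also have "\<dots> = (\<Sum>k=1..n. (T^k)$n)"
      using zpp[OF T0, of n "Suc n"] by simp
    also have "\<dots> = (geom T - 1) $ n"
      by (cases n) (simp_all add: geom_def sum.atLeast_Suc_atMost[of 0])
    finally show ?thesis .
  qed
  then show ?thesis by (simp add: fps_eq_iff)
qed


lemma geom_right:
  fixes T :: "'a::ring_1 fps" assumes T0: "T$0 = 0"
  shows "geom T * T = geom T - 1"
proof -
  have "(geom T * T) $ n = (geom T - 1) $ n" for n
  proof -
    have "(geom T * T) $ n = (\<Sum>j=0..n. (\<Sum>k=0..j. (T^k)$j) * T$(n-j))"
      by (simp add: fps_mult_nth geom_def)
    also have "\<dots> = (\<Sum>j=0..n. (\<Sum>k=0..n. (T^k)$j) * T$(n-j))"
    proof (rule sum.cong[OF refl])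
      fix j assume "j \<in> {0..n}"
      then have "(\<Sum>k=0..j. (T^k)$j) = (\<Sum>k=0..n. (T^k)$j)"
        by (intro sum.mono_neutral_left) (auto simp: zpp[OF T0])
      then show "(\<Sum>k=0..j. (T^k)$j) * T$(n-j) = (\<Sum>k=0..n. (T^k)$j) * T$(n-j)" by simp
    qed
    also have "\<dots> = (\<Sum>k=0..n. \<Sum>j=0..n. (T^k)$j * T$(n-j))"
      unfolding sum_distrib_right by (rule sum.swap)
    also have "\<dots> = (\<Sum>k=0..n. (T^Suc k)$n)"
      by (simp only: power_Suc2 fps_mult_nth)
    also have "\<dots> = (\<Sum>k=1..Suc n. (T^k)$n)"
      by (rule sum.reindex_bij_witness[where i="\<lambda>k. k - 1" and j="Suc"]) auto
    also have "\<dots> = (\<Sum>k=1..n. (T^k)$n)"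
      using zpp[OF T0, of n "Suc n"] by simp
    also have "\<dots> = (geom T - 1) $ n"
      by (cases n) (simp_all add: geom_def sum.atLeast_Suc_atMost[of 0])
    finally show ?thesis .
  qed
  then show ?thesis by (simp add: fps_eq_iff)
qed

lemma geom_inv_left: "(T::'a::ring_1 fps)$0 = 0 \<Longrightarrow> (1 - T) * geom T = 1"
  by (simp add: left_diff_distrib geom_left)
lemma geom_inv_right: "(T::'a::ring_1 fps)$0 = 0 \<Longrightarrow> geom T * (1 - T) = 1"
  by (simp add: right_diff_distrib geom_right)

lemma fps_comm:
  fixes F G :: "'a::ring_1 fps"
  assumes "\<And>i j. F$i * G$j = G$j * F$i"
  shows "F * G = G * F"
proof -
  have "(F * G) $ n = (G * F) $ n" for n
  proof -
    have "(F * G) $ n = (\<Sum>i=0..n. G$(n-i) * F$i)"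
      by (simp add: fps_mult_nth assms)
    also have "\<dots> = (\<Sum>i=0..n. G$(n - (n + 0 - i)) * F$(n + 0 - i))"
      by (rule sum.atLeastAtMost_rev)
    also have "\<dots> = (G * F) $ n"
      by (simp add: fps_mult_nth)
    finally show ?thesis .
  qed
  then show ?thesis by (simp add: fps_eq_iff)
qed


definition G0 :: "complex fps" where "G0 = Abs_fps (\<lambda>_. 1)"
definition G1 :: "complex fps" where "G1 = Abs_fps (\<lambda>n. of_nat (n + 1))"

lemma G0_eq: "G0 - fps_X * G0 = 1"
  by (simp add: fps_eq_iff G0_def)
lemma G1_eq: "G1 - fps_X * G1 = G0"
  by (simp add: fps_eq_iff G0_def G1_def)

section \<open>Substitution of an element into a scalar series\<close>

definition Sub :: "(complex \<Rightarrow> 'a::ring_1) \<Rightarrow> complex fps \<Rightarrow> 'a \<Rightarrow> complex fps \<Rightarrow> 'a fps" where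
  "Sub sc u z f = Abs_fps (\<lambda>n. \<Sum>i=0..n. sc (f$i * (u^i)$n) * z^i)"

context fixes sc :: "complex \<Rightarrow> 'a::ring_1" and u :: "complex fps" and z :: 'a
  assumes ca: "complex_alg sc" and u0: "u$0 = 0"
begin

lemma sc_pow_mult: "sc c * z^k * (sc d * z^m) = sc (c * d) * z^(k+m)"
proof -
  have "sc c * z^k * (sc d * z^m) = sc c * (z^k * sc d) * z^m" by (simp only: mult.assoc)
  also have "\<dots> = sc c * (sc d * z^k) * z^m" by (simp only: ca_comm[OF ca, of d "z^k"])
  also have "\<dots> = sc (c * d) * z^(k+m)" by (simp only: mult.assoc ca_mult[OF ca] power_add)
  finally show ?thesis .
qed

lemma Sub_ext: "n \<le> N \<Longrightarrow> Sub sc u z f $ n = (\<Sum>i=0..N. sc (f$i * (u^i)$n) * z^i)"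
  unfolding Sub_def by (auto intro!: sum.mono_neutral_left simp: zpp[OF u0] ca_0[OF ca])

lemma Sub_diff: "Sub sc u z (f - g) = Sub sc u z f - Sub sc u z g"
  by (simp add: Sub_def fps_eq_iff ring_distribs ca_diff[OF ca] sum_subtractf)

lemma Sub_add: "Sub sc u z (f + g) = Sub sc u z f + Sub sc u z g"
  by (simp add: Sub_def fps_eq_iff ring_distribs ca_add[OF ca] sum.distrib)

lemma Sub_1: "Sub sc u z 1 = 1"
proof -
  have "Sub sc u z 1 $ n = (1::'a fps) $ n" for n
  proof -
    have "Sub sc u z 1 $ n = (\<Sum>i=0..n. (if i = 0 then sc ((1::complex fps)$n) else 0))"
      unfolding Sub_def fps_nth_Abs_fps by (intro sum.cong refl) (auto simp: ca_0[OF ca])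
    also have "\<dots> = sc ((1::complex fps)$n)" by simp
    also have "\<dots> = (1::'a fps) $ n" by (simp add: ca_0[OF ca] ca_1[OF ca])
    finally show ?thesis .
  qed
  then show ?thesis by (simp add: fps_eq_iff)
qed

lemma Sub_shift: "Sub sc u z f * (E sc u * fps_const z) = Sub sc u z (fps_X * f)"
proof -
  have "(Sub sc u z f * (E sc u * fps_const z)) $ n = Sub sc u z (fps_X * f) $ n" for n
  proof -
    have "(Sub sc u z f * (E sc u * fps_const z)) $ n =
       (\<Sum>k=0..n. (\<Sum>i=0..n. sc (f$i * (u^i)$k) * z^i) * (sc (u$(n-k)) * z))"
    proof -
      have e: "(E sc u * fps_const z) $ m = sc (u$m) * z" for m by simp
      show ?thesis unfolding fps_mult_nth[of "Sub sc u z f"] e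
        by (intro sum.cong refl) (simp add: Sub_ext)
    qed
    also have "\<dots> = (\<Sum>k=0..n. \<Sum>i=0..n. sc (f$i * ((u^i)$k * u$(n-k))) * z^(Suc i))"
    proof -
      have "sc (f$i * (u^i)$k) * z^i * (sc (u$(n-k)) * z^1) = sc (f$i * ((u^i)$k * u$(n-k))) * z^(Suc i)" for i k
        by (subst sc_pow_mult) (simp add: mult.assoc)
      then show ?thesis by (simp add: sum_distrib_right)
    qed
    also have "\<dots> = (\<Sum>i=0..n. sc (f$i * (u^i * u)$n) * z^(Suc i))"
      by (subst sum.swap) (simp add: fps_mult_nth ca_sum[OF ca] sum_distrib_left sum_distrib_right[symmetric])
    also have "\<dots> = (\<Sum>i=0..n. sc (f$i * (u^Suc i)$n) * z^(Suc i))"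
      by (simp only: power_Suc2)
    also have "\<dots> = (\<Sum>i=0..Suc n. sc ((fps_X * f)$i * (u^i)$n) * z^i)"
      by (subst sum.atLeast0_atMost_Suc_shift) (simp add: ca_0[OF ca])
    also have "\<dots> = Sub sc u z (fps_X * f) $ n"
      by (rule Sub_ext[symmetric]) simp
    finally show ?thesis .
  qed
  then show ?thesis by (simp add: fps_eq_iff)
qed

lemma Sub_comm: "(E sc u * fps_const z) * Sub sc u z f = Sub sc u z f * (E sc u * fps_const z)"
proof (rule fps_comm)
  fix i j
  have "sc (u $ i) * z^1 * (sc c * z ^ k) = sc c * z ^ k * (sc (u $ i) * z^1)" for c k
    by (simp only: sc_pow_mult mult.commute add.commute)
  then show "(E sc u * fps_const z) $ i * Sub sc u z f $ j = Sub sc u z f $ j * (E sc u * fps_const z) $ i"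
    by (simp add: Sub_def sum_distrib_left sum_distrib_right)
qed

lemma Phi_Sub: "C_linear sc g \<Longrightarrow> Phi g (Sub sc u z f) = Abs_fps (\<lambda>i. f$i * g (z^i)) oo u"
  by (simp add: fps_eq_iff Sub_def fps_compose_nth cl_sum cl_scal mult_ac)

lemma Sub_alg: "Sub sc u z f $ n \<in> alg_gen sc z"
  unfolding alg_gen_def Sub_def
  by (auto intro!: exI[of _ "\<lambda>i. f$i * (u^i)$n"] exI[of _ "Suc n"] simp: atLeast0AtMost lessThan_Suc_atMost)



lemma Q_inv_right: "Sub sc u z G0 * (1 - E sc u * fps_const z) = 1"
  by (simp add: right_diff_distrib Sub_shift Sub_diff[symmetric] G0_eq Sub_1)
lemma Q_inv_left: "(1 - E sc u * fps_const z) * Sub sc u z G0 = 1"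
  by (simp add: left_diff_distrib Sub_comm Sub_shift Sub_diff[symmetric] G0_eq Sub_1)
lemma Q2_eq: "(1 - E sc u * fps_const z) * Sub sc u z G1 = Sub sc u z G0"
  by (simp add: left_diff_distrib Sub_comm Sub_shift Sub_diff[symmetric] G1_eq)
lemma QQ: "Sub sc u z G0 * Sub sc u z G0 = Sub sc u z G1"
proof -
  have "Sub sc u z G0 * Sub sc u z G0 = Sub sc u z G0 * ((1 - E sc u * fps_const z) * Sub sc u z G1)"
    by (simp add: Q2_eq)
  also have "\<dots> = Sub sc u z G1" by (simp add: mult.assoc[symmetric] Q_inv_right)
  finally show ?thesis .
qed

end


lemma triangle_swap:
  fixes g :: "nat \<Rightarrow> nat \<Rightarrow> nat \<Rightarrow> 'b::comm_monoid_add"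
  shows "(\<Sum>m=0..n. \<Sum>i=0..m. g i (m-i) (n-m)) = (\<Sum>m=0..n. \<Sum>i=0..m. g i (n-m) (m-i))"
proof -
  let ?D = "{(i,j). i + j \<le> n}"
  have 1: "(\<Sum>(i,j)\<in>?D. g i j (n-i-j)) = (\<Sum>m=0..n. \<Sum>i=0..m. g i (m-i) (n-m))"
    unfolding sum.triangle_reindex_eq atLeast0AtMost
    by (intro sum.cong refl) (auto intro!: arg_cong[where f="g _ _"])
  have 2: "(\<Sum>(i,j)\<in>?D. g i (n-i-j) j) = (\<Sum>m=0..n. \<Sum>i=0..m. g i (n-m) (m-i))"
    unfolding sum.triangle_reindex_eq atLeast0AtMost
    by (intro sum.cong refl) (auto intro!: arg_cong[where f="\<lambda>x. g _ x _"])
  have 3: "(\<Sum>(i,j)\<in>?D. g i j (n-i-j)) = (\<Sum>(i,j)\<in>?D. g i (n-i-j) j)"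
    by (rule sum.reindex_bij_witness[where i="\<lambda>(i,j). (i, n-i-j)" and j="\<lambda>(i,j). (i, n-i-j)"]) auto
  show ?thesis using 1 2 3 by simp
qed



section \<open>Infinitesimal freeness: words\<close>

locale infsetup =
  fixes sc :: "complex \<Rightarrow> 'a::ring_1" and \<phi> \<phi>' :: "'a \<Rightarrow> complex" and b1 b2 :: 'a
  assumes ncps: "inf_ncps sc \<phi> \<phi>'"
    and ifree: "inf_free sc \<phi> \<phi>' UNIV (\<lambda>i::bool. if i then alg_gen sc b1 else alg_gen sc b2)"
begin

lemma ca: "complex_alg sc" using ncps by (simp add: inf_ncps_def)
lemma clp: "C_linear sc \<phi>" using ncps by (simp add: inf_ncps_def)
lemma clp': "C_linear sc \<phi>'" using ncps by (simp add: inf_ncps_def)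
lemma phi1: "\<phi> 1 = 1" using ncps by (simp add: inf_ncps_def)
lemma phi'1: "\<phi>' 1 = 0" using ncps by (simp add: inf_ncps_def)

definition AG :: "bool \<Rightarrow> 'a set" where "AG i = (if i then alg_gen sc b1 else alg_gen sc b2)"
definition cent :: "bool \<Rightarrow> 'a set" where "cent i = {c \<in> AG i. \<phi> c = 0}"
definition alt :: "bool \<Rightarrow> 'a list \<Rightarrow> bool" where
  "alt i cs \<longleftrightarrow> cs \<noteq> [] \<and> (\<forall>l<length cs. cs!l \<in> cent (if even l then i else \<not> i))"

lemma word:
  assumes "alt i cs"
  shows "\<phi> (prod_list cs) = 0 \<and> \<phi>' (prod_list cs) =
    (if odd (length cs) then (\<Prod>l<length cs div 2. \<phi> (cs!l * cs!(length cs - 1 - l))) * \<phi>' (cs!(length cs div 2)) else 0)"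
proof -
  define n where "n = length cs"
  define \<iota> where "\<iota> = (\<lambda>l::nat. if even l then i else \<not> i)"
  define c where "c = (\<lambda>l. cs!l)"
  have n1: "n \<ge> 1" using assms by (simp add: alt_def n_def Suc_le_eq)
  have h1: "\<forall>l<n. \<iota> l \<in> UNIV \<and> c l \<in> (if \<iota> l then alg_gen sc b1 else alg_gen sc b2) \<and> \<phi> (c l) = 0"
  proof (intro allI impI)
    fix l assume "l < n"
    then have "cs!l \<in> cent (\<iota> l)" using assms by (simp add: alt_def n_def \<iota>_def)
    then show "\<iota> l \<in> UNIV \<and> c l \<in> (if \<iota> l then alg_gen sc b1 else alg_gen sc b2) \<and> \<phi> (c l) = 0"
      by (simp add: c_def cent_def AG_def)
  qed
  have h2: "\<forall>l. Suc l < n \<longrightarrow> \<iota> l \<noteq> \<iota> (Suc l)" by (simp add: \<iota>_def)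
  have pl: "prod_list (map c [0..<n]) = prod_list cs"
    by (simp add: c_def n_def map_nth)
  have par: "even (n - 1 - l) = even l" if "odd n" "l < n" for l
  proof -
    have "\<not> n - 1 < l" using that by simp
    moreover have "even (n - 1)" using that by simp
    ultimately show ?thesis using that by (simp add: even_diff_nat)
  qed
  have pal: "odd n \<Longrightarrow> (\<forall>l<n. \<iota> l = \<iota> (n - 1 - l))"
    unfolding \<iota>_def using par by simp
  have ifeq: "(if odd n \<and> (\<forall>l<n. \<iota> l = \<iota> (n - 1 - l)) then A else 0) = (if odd n then A else 0)" for A :: complex
  proof -
    have "(odd n \<and> (\<forall>l<n. \<iota> l = \<iota> (n - 1 - l))) \<longleftrightarrow> odd n" using pal by blast
    then show ?thesis by (simp only:)
  qed
  have H: "\<phi> (prod_list (map c [0..<n])) = 0 \<and> \<phi>' (prod_list (map c [0..<n])) =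
            (if odd n \<and> (\<forall>l<n. \<iota> l = \<iota> (n - 1 - l))
             then (\<Prod>l<n div 2. \<phi> (c l * c (n - 1 - l))) * \<phi>' (c (n div 2))
             else 0)"
    by (rule ifree[unfolded inf_free_def, THEN spec[of _ n], THEN mp, OF n1,
          THEN spec[of _ \<iota>], THEN spec[of _ c], THEN mp, OF conjI[OF h1 h2]])
  then show ?thesis unfolding pl ifeq by (simp add: n_def c_def)
qed


lemma alt_peel:
  assumes a: "alt i cs" and m: "odd (length cs)" and c: "c \<in> cent (\<not> i)" and c': "c' \<in> cent (\<not> i)"
  shows "alt (\<not> i) (c # cs @ [c'])"
  unfolding alt_def
proof (intro conjI allI impI)
  show "c # cs @ [c'] \<noteq> []" by simp
  fix l assume l: "l < length (c # cs @ [c'])"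
  show "(c # cs @ [c']) ! l \<in> cent (if even l then \<not> i else \<not> \<not> i)"
  proof (cases l)
    case 0 then show ?thesis using c by simp
  next
    case (Suc l')
    show ?thesis
    proof (cases "l' < length cs")
      case True
      then have "cs ! l' \<in> cent (if even l' then i else \<not> i)" using a by (simp add: alt_def)
      moreover have "(if even l' then i else \<not> i) = (if even l then \<not> i else \<not> \<not> i)"
        using Suc by simp
      ultimately show ?thesis using True Suc by (simp add: nth_append)
    next
      case False
      then have "l' = length cs" using l Suc by simp
      then show ?thesis using c' m Suc by (simp add: nth_append)
    qed
  qed
qed

lemma word_peel:
  assumes a: "alt i cs" and m: "odd (length cs)" and c: "c \<in> cent (\<not> i)" and c': "c' \<in> cent (\<not> i)"
  shows "\<phi>' (c * prod_list cs * c') = \<phi> (c * c') * \<phi>' (prod_list cs)"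
proof -
  define m where "m = length cs"
  define L where "L = c # cs @ [c']"
  have aL: "alt (\<not> i) L" unfolding L_def by (rule alt_peel[OF a m c c'])
  have lenL: "length L = Suc (Suc m)" by (simp add: L_def m_def)
  have oL: "odd (length L)" using m by (simp add: lenL m_def)
  have L0: "L!0 = c" by (simp add: L_def)
  have Ls: "l < m \<Longrightarrow> L!(Suc l) = cs!l" for l by (simp add: L_def m_def nth_append)
  have Lm: "L!(Suc m) = c'" by (simp add: L_def m_def nth_append)
  have pL: "prod_list L = c * prod_list cs * c'" by (simp add: L_def mult.assoc)
  have d2: "Suc (Suc m) div 2 = Suc (m div 2)" by simp
  have mid: "L!(Suc (m div 2)) = cs!(m div 2)"
  proof (rule Ls)
    have "m > 0" using m by (auto simp: m_def intro: Nat.gr0I)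
    then show "m div 2 < m" by (intro div_less_dividend) auto
  qed
  have "\<phi>' (prod_list L) = (\<Prod>l<Suc (m div 2). \<phi> (L!l * L!(Suc (Suc m) - 1 - l))) * \<phi>' (L!(Suc (m div 2)))"
    using word[OF aL] oL unfolding lenL d2 by simp
  also have "(\<Prod>l<Suc (m div 2). \<phi> (L!l * L!(Suc (Suc m) - 1 - l))) =
      \<phi> (c * c') * (\<Prod>l<m div 2. \<phi> (cs!l * cs!(m - 1 - l)))"
  proof -
    have "(\<Prod>l<Suc (m div 2). \<phi> (L!l * L!(Suc (Suc m) - 1 - l))) =
        \<phi> (L!0 * L!(Suc m)) * (\<Prod>l<m div 2. \<phi> (L!(Suc l) * L!(Suc (Suc m) - 1 - Suc l)))"
      by (subst prod.lessThan_Suc_shift) simp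
    also have "(\<Prod>l<m div 2. \<phi> (L!(Suc l) * L!(Suc (Suc m) - 1 - Suc l))) = (\<Prod>l<m div 2. \<phi> (cs!l * cs!(m - 1 - l)))"
    proof (rule prod.cong[OF refl])
      fix l assume "l \<in> {..<m div 2}"
      then have l: "l < m" by simp
      then have "Suc (Suc m) - 1 - Suc l = Suc (m - 1 - l)" by simp
      moreover have "m - 1 - l < m" using l by simp
      ultimately show "\<phi> (L!(Suc l) * L!(Suc (Suc m) - 1 - Suc l)) = \<phi> (cs!l * cs!(m - 1 - l))"
        using Ls[OF l] Ls[of "m - 1 - l"] by simp
    qed
    finally show ?thesis using L0 Lm by simp
  qed
  finally have "\<phi>' (prod_list L) = \<phi> (c * c') * ((\<Prod>l<m div 2. \<phi> (cs!l * cs!(m - 1 - l))) * \<phi>' (cs!(m div 2)))"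
    using mid by simp
  also have "\<dots> = \<phi> (c * c') * \<phi>' (prod_list cs)"
    using word[OF a] m by (simp add: m_def)
  finally show ?thesis using pL by simp
qed

lemma alt_ext:
  assumes a: "alt i cs" and m: "odd (length cs)" and c: "c \<in> cent (\<not> i)"
  shows "alt i (cs @ [c])"
  unfolding alt_def
proof (intro conjI allI impI)
  show "cs @ [c] \<noteq> []" by simp
  fix l assume l: "l < length (cs @ [c])"
  show "(cs @ [c]) ! l \<in> cent (if even l then i else \<not> i)"
  proof (cases "l < length cs")
    case True then show ?thesis using a by (simp add: alt_def nth_append)
  next
    case False
    then have "l = length cs" using l by simp
    then show ?thesis using c m by (simp add: nth_append)
  qed
qed

inductive_set Wset :: "bool \<Rightarrow> bool \<Rightarrow> 'a set" for i :: bool and par :: bool where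
  W0: "0 \<in> Wset i par"
| Wadd: "alt i cs \<Longrightarrow> odd (length cs) = par \<Longrightarrow> x \<in> Wset i par \<Longrightarrow> prod_list cs + x \<in> Wset i par"

lemma W_plus: "x \<in> Wset i par \<Longrightarrow> y \<in> Wset i par \<Longrightarrow> x + y \<in> Wset i par"
  by (induction x rule: Wset.induct) (auto simp: add.assoc intro: Wset.intros)

lemma W_sum: "(\<And>k. k \<in> K \<Longrightarrow> f k \<in> Wset i par) \<Longrightarrow> sum f K \<in> Wset i par"
  by (induction K rule: infinite_finite_induct) (auto intro: W_plus Wset.intros)

lemma W_phi: "x \<in> Wset i par \<Longrightarrow> \<phi> x = 0"
  by (induction x rule: Wset.induct) (auto simp: cl_0[OF clp] cl_add[OF clp] word)

lemma W_phi'_even: "x \<in> Wset i False \<Longrightarrow> \<phi>' x = 0"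
proof (induction x rule: Wset.induct)
  case W0 then show ?case by (simp add: cl_0[OF clp'])
next
  case (Wadd cs x)
  then show ?case using word[OF Wadd(1)] by (simp add: cl_add[OF clp'])
qed

lemma W_base: "c \<in> cent i \<Longrightarrow> c \<in> Wset i True"
proof -
  assume c: "c \<in> cent i"
  have "alt i [c]" using c by (simp add: alt_def)
  then have "prod_list [c] + 0 \<in> Wset i True" by (intro Wset.intros) simp_all
  then show ?thesis by simp
qed

lemma W_peel:
  assumes "x \<in> Wset i True" and c: "c \<in> cent (\<not> i)" and c': "c' \<in> cent (\<not> i)"
  shows "c * x * c' \<in> Wset (\<not> i) True \<and> \<phi>' (c * x * c') = \<phi> (c * c') * \<phi>' x"
  using assms(1)
proof (induction x rule: Wset.induct)
  case W0 then show ?case by (simp add: cl_0[OF clp'] Wset.W0)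
next
  case (Wadd cs x)
  have e: "c * (prod_list cs + x) * c' = prod_list (c # cs @ [c']) + c * x * c'"
    by (simp add: ring_distribs mult.assoc)
  have "prod_list (c # cs @ [c']) + c * x * c' \<in> Wset (\<not> i) True"
    using Wadd alt_peel[OF Wadd(1) _ c c'] by (intro Wset.intros) auto
  moreover have "\<phi>' (c * (prod_list cs + x) * c') = \<phi> (c * c') * \<phi>' (prod_list cs + x)"
    using Wadd word_peel[OF Wadd(1) _ c c']
    by (simp add: ring_distribs cl_add[OF clp'])
  ultimately show ?case using e by simp
qed

lemma W_ext:
  assumes "x \<in> Wset i True" and c: "c \<in> cent (\<not> i)"
  shows "x * c \<in> Wset i False"
  using assms(1)
proof (induction x rule: Wset.induct)
  case W0 then show ?case by (simp add: Wset.W0)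
next
  case (Wadd cs x)
  have "prod_list (cs @ [c]) + x * c \<in> Wset i False"
    using Wadd alt_ext[OF Wadd(1) _ c] by (intro Wset.intros) auto
  then show ?case by (simp add: ring_distribs)
qed

lemma cent_0: "0 \<in> cent i"
  by (auto simp: cent_def AG_def alg_gen_def cl_0[OF clp] intro!: exI[of _ 0])


definition ser :: "bool \<Rightarrow> 'a fps \<Rightarrow> bool" where "ser i F \<longleftrightarrow> (\<forall>n. F$n \<in> cent i)"
definition wser :: "bool \<Rightarrow> bool \<Rightarrow> 'a fps \<Rightarrow> bool" where "wser i par F \<longleftrightarrow> (\<forall>n. F$n \<in> Wset i par)"

lemma triple_nth: "((F::'a fps)*G*H)$n = (\<Sum>m=0..n. \<Sum>i=0..m. F$i * G$(m-i) * H$(n-m))"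
  by (simp only: fps_mult_nth sum_distrib_right)

lemma ser_peel:
  assumes F: "ser (\<not> i) F" and H: "ser (\<not> i) H" and G: "wser i True G"
  shows "wser (\<not> i) True (F*G*H) \<and> Phi \<phi>' (F*G*H) = Phi \<phi> (F*H) * Phi \<phi>' G"
proof
  have P: "F$j * G$k * H$l \<in> Wset (\<not> i) True \<and> \<phi>' (F$j * G$k * H$l) = \<phi> (F$j * H$l) * \<phi>' (G$k)" for j k l
    using W_peel[of "G$k" i "F$j" "H$l"] F H G by (simp add: ser_def wser_def)
  show "wser (\<not> i) True (F*G*H)"
    unfolding wser_def triple_nth using P by (auto intro!: W_sum)
  have "(Phi \<phi>' (F*G*H))$n = (Phi \<phi> (F*H) * Phi \<phi>' G)$n" for n
  proof -
    have "(Phi \<phi>' (F*G*H))$n = (\<Sum>m=0..n. \<Sum>j=0..m. \<phi> (F$j * H$(n-m)) * \<phi>' (G$(m-j)))"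
      by (simp add: triple_nth cl_sum[OF clp'] P)
    also have "\<dots> = (\<Sum>m=0..n. \<Sum>j=0..m. \<phi> (F$j * H$(m-j)) * \<phi>' (G$(n-m)))"
      using triangle_swap[of "\<lambda>j k l. \<phi> (F$j * H$l) * \<phi>' (G$k)" n] by simp
    also have "\<dots> = (Phi \<phi> (F*H) * Phi \<phi>' G)$n"
      by (simp add: fps_mult_nth cl_sum[OF clp] sum_distrib_right)
    finally show ?thesis .
  qed
  then show "Phi \<phi>' (F*G*H) = Phi \<phi> (F*H) * Phi \<phi>' G" by (simp add: fps_eq_iff)
qed

lemma ser_ext:
  assumes F: "wser i True F" and H: "ser (\<not> i) H"
  shows "wser i False (F*H)"
  unfolding wser_def fps_mult_nth using F H W_ext
  by (auto intro!: W_sum simp: wser_def ser_def)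

lemma wser_base: "ser i F \<Longrightarrow> wser i True F"
  by (simp add: ser_def wser_def W_base)

lemma wser_Phi: "wser i par F \<Longrightarrow> Phi \<phi> F = 0"
  by (auto simp: wser_def fps_eq_iff intro: W_phi)

lemma wser_Phi': "wser i False F \<Longrightarrow> Phi \<phi>' F = 0"
  by (auto simp: wser_def fps_eq_iff intro: W_phi'_even)

lemma Phi_1: "Phi \<phi> 1 = 1"
  by (simp add: fps_eq_iff phi1 cl_0[OF clp])
lemma Phi'_1: "Phi \<phi>' 1 = 0"
  by (simp add: fps_eq_iff phi'1 cl_0[OF clp'])

lemma free_main:
  assumes A: "ser True A" and B: "ser False B" and A0: "A$0 = 0" and B0: "B$0 = 0"
  defines "S \<equiv> geom (A*B)"
  shows "Phi \<phi> ((1+B)*S*(1+A)) = 1"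
    and "(1 - Phi \<phi> (A*A) * Phi \<phi> (B*B)) * Phi \<phi>' ((1+B)*S*(1+A)) =
         Phi \<phi>' A + Phi \<phi> (A*A) * Phi \<phi>' B + Phi \<phi>' B + Phi \<phi> (B*B) * Phi \<phi>' A"
proof -
  define PA where "PA = S * A"
  define PB where "PB = B * S"
  have T0: "(A*B)$0 = 0" using A0 by simp
  have S1: "S = 1 + A * B * S" using geom_left[OF T0] by (simp add: S_def)
  have S2: "S = 1 + S * (A * B)" using geom_right[OF T0] by (simp add: S_def)
  have PA_eq: "PA = A + A * PB * A"
  proof -
    have "PA = (1 + A * B * S) * A" unfolding PA_def using S1 by simp
    also have "\<dots> = A + A * PB * A" by (simp add: PB_def ring_distribs mult.assoc)
    finally show ?thesis .
  qed
  have PB_eq: "PB = B + B * PA * B"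
  proof -
    have "PB = B * (1 + S * (A * B))" unfolding PB_def using S2 by simp
    also have "\<dots> = B + B * PA * B" by (simp add: PA_def ring_distribs mult.assoc)
    finally show ?thesis .
  qed
  have S_eq: "S = 1 + PA * B" using S2 by (simp add: PA_def mult.assoc)
  have cA: "A$n \<in> cent True" for n using A by (simp add: ser_def)
  have cB: "B$n \<in> cent False" for n using B by (simp add: ser_def)
  have W: "PA$n \<in> Wset True True \<and> PB$n \<in> Wset False True" for n
  proof (induction n rule: less_induct)
    case (less n)
    have t1: "A$j * PB$(m-j) * A$(n-m) \<in> Wset True True" if "j \<le> m" "m \<le> n" for j m
    proof (cases "j = 0")
      case True then show ?thesis using A0 by (simp add: Wset.W0)
    next
      case False
      then have "PB$(m-j) \<in> Wset False True" using less that by simp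
      then show ?thesis using W_peel[of "PB$(m-j)" False "A$j" "A$(n-m)"] cA by simp
    qed
    have t2: "B$j * PA$(m-j) * B$(n-m) \<in> Wset False True" if "j \<le> m" "m \<le> n" for j m
    proof (cases "j = 0")
      case True then show ?thesis using B0 by (simp add: Wset.W0)
    next
      case False
      then have "PA$(m-j) \<in> Wset True True" using less that by simp
      then show ?thesis using W_peel[of "PA$(m-j)" True "B$j" "B$(n-m)"] cB by simp
    qed
    have "PA$n = A$n + (A * PB * A)$n" by (subst PA_eq) simp
    moreover have "(A * PB * A)$n \<in> Wset True True"
      unfolding triple_nth using t1 by (auto intro!: W_sum)
    ultimately have 1: "PA$n \<in> Wset True True" using W_plus W_base cA by simp
    have "PB$n = B$n + (B * PA * B)$n" by (subst PB_eq) simp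
    moreover have "(B * PA * B)$n \<in> Wset False True"
      unfolding triple_nth using t2 by (auto intro!: W_sum)
    ultimately have 2: "PB$n \<in> Wset False True" using W_plus W_base cB by simp
    show ?case using 1 2 by simp
  qed
  have wPA: "wser True True PA" and wPB: "wser False True PB"
    using W by (simp_all add: wser_def)
  have wPAB: "wser True False (PA * B)" using ser_ext[OF wPA] B by simp
  have wPBA: "wser False False (PB * A)" using ser_ext[OF wPB] A by simp
  have expand: "(1+B)*S*(1+A) = 1 + PA * B + PB + PA + PB * A"
  proof -
    have "(1+B)*S*(1+A) = S + S * A + B * S + B * S * A" by (simp add: ring_distribs add.assoc)
    also have "\<dots> = 1 + PA * B + PB + PA + PB * A" using S_eq by (simp add: PA_def PB_def add.assoc)
    finally show ?thesis .
  qed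
  show "Phi \<phi> ((1+B)*S*(1+A)) = 1"
    unfolding expand
    by (simp add: Phi_add[OF ca clp] Phi_1 wser_Phi[OF wPAB] wser_Phi[OF wPB] wser_Phi[OF wPA] wser_Phi[OF wPBA])
  have PhiAll: "Phi \<phi>' ((1+B)*S*(1+A)) = Phi \<phi>' PA + Phi \<phi>' PB"
    unfolding expand
    by (simp add: Phi_add[OF ca clp'] Phi'_1 wser_Phi'[OF wPAB] wser_Phi'[OF wPBA])
  define a where "a = Phi \<phi> (A*A)"
  define b where "b = Phi \<phi> (B*B)"
  define a' where "a' = Phi \<phi>' A"
  define b' where "b' = Phi \<phi>' B"
  define x where "x = Phi \<phi>' PA"
  define y where "y = Phi \<phi>' PB"
  have x: "x = a' + a * y"
    unfolding x_def a'_def a_def y_def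
    by (subst PA_eq) (simp add: Phi_add[OF ca clp'] ser_peel[of False A A PB, simplified] A wPB)
  have y: "y = b' + b * x"
    unfolding x_def b'_def b_def y_def
    by (subst PB_eq) (simp add: Phi_add[OF ca clp'] ser_peel[of True B B PA, simplified] B wPA)
  have e1: "(1 - a * b) * x = a' + a * b'"
  proof -
    have "(1 - a * b) * x = x - a * (b * x)" by (simp add: algebra_simps)
    also have "b * x = y - b'" using y by simp
    finally have "(1 - a * b) * x = x - a * (y - b')" .
    also have "\<dots> = a' + a * b'" by (subst x) (simp add: algebra_simps)
    finally show ?thesis .
  qed
  have e2: "(1 - a * b) * y = b' + b * a'"
  proof -
    have "(1 - a * b) * y = y - b * (a * y)" by (simp add: algebra_simps)
    also have "a * y = x - a'" using x by simp
    finally have "(1 - a * b) * y = y - b * (x - a')" .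
    also have "\<dots> = b' + b * a'" by (subst y) (simp add: algebra_simps)
    finally show ?thesis .
  qed
  have "(1 - a * b) * (x + y) = (1 - a * b) * x + (1 - a * b) * y" by (rule distrib_left)
  also have "\<dots> = a' + a * b' + (b' + b * a')" by (simp only: e1 e2)
  finally have "(1 - a * b) * (x + y) = a' + a * b' + b' + b * a'" by (simp add: add.assoc)
  then show "(1 - Phi \<phi> (A*A) * Phi \<phi> (B*B)) * Phi \<phi>' ((1+B)*S*(1+A)) =
         Phi \<phi>' A + Phi \<phi> (A*A) * Phi \<phi>' B + Phi \<phi>' B + Phi \<phi> (B*B) * Phi \<phi>' A"
    unfolding PhiAll a_def b_def a'_def b'_def x_def y_def .
qed


lemma ag_0: "0 \<in> alg_gen sc z"
  unfolding alg_gen_def by (auto intro!: exI[of _ 0])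

lemma ag_1: "1 \<in> alg_gen sc z"
  unfolding alg_gen_def by (auto intro!: exI[of _ "\<lambda>_. 1"] exI[of _ 1] simp: ca_1[OF ca])

lemma ag_scal: "x \<in> alg_gen sc z \<Longrightarrow> sc a * x \<in> alg_gen sc z"
proof -
  assume "x \<in> alg_gen sc z"
  then obtain c N where x: "x = (\<Sum>k<N. sc (c k) * z ^ k)" by (auto simp: alg_gen_def)
  have "sc a * x = (\<Sum>k<N. sc (a * c k) * z ^ k)"
    by (simp add: x sum_distrib_left ca_mult[OF ca] mult.assoc)
  then show ?thesis unfolding alg_gen_def
    by (intro CollectI exI[of _ "\<lambda>k. a * c k"] exI[of _ N] conjI) simp_all
qed

lemma ag_add: "x \<in> alg_gen sc z \<Longrightarrow> y \<in> alg_gen sc z \<Longrightarrow> x + y \<in> alg_gen sc z"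
proof -
  assume "x \<in> alg_gen sc z" "y \<in> alg_gen sc z"
  then obtain c N d M where x: "x = (\<Sum>k<N. sc (c k) * z ^ k)" and y: "y = (\<Sum>k<M. sc (d k) * z ^ k)"
    by (auto simp: alg_gen_def)
  define c' where "c' = (\<lambda>k. if k < N then c k else 0)"
  define d' where "d' = (\<lambda>k. if k < M then d k else 0)"
  have x': "x = (\<Sum>k<N+M. sc (c' k) * z ^ k)"
    unfolding x by (rule sum.mono_neutral_cong_left) (auto simp: c'_def ca_0[OF ca])
  have y': "y = (\<Sum>k<N+M. sc (d' k) * z ^ k)"
    unfolding y by (rule sum.mono_neutral_cong_left) (auto simp: d'_def ca_0[OF ca])
  have "x + y = (\<Sum>k<N+M. sc (c' k + d' k) * z ^ k)"
    by (simp add: x' y' sum.distrib[symmetric] ca_add[OF ca] ring_distribs)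
  then show ?thesis unfolding alg_gen_def
    by (intro CollectI exI[of _ "\<lambda>k. c' k + d' k"] exI[of _ "N+M"] conjI) simp_all
qed

lemma ag_sum: "(\<And>k. k \<in> K \<Longrightarrow> f k \<in> alg_gen sc z) \<Longrightarrow> sum f K \<in> alg_gen sc z"
  by (induction K rule: infinite_finite_induct) (auto intro: ag_add ag_0)

lemma ag_diff: "x \<in> alg_gen sc z \<Longrightarrow> y \<in> alg_gen sc z \<Longrightarrow> x - y \<in> alg_gen sc z"
proof -
  assume "x \<in> alg_gen sc z" "y \<in> alg_gen sc z"
  moreover have "sc (-1) * y = - y" by (simp add: ca_uminus[OF ca] ca_1[OF ca])
  ultimately show ?thesis using ag_add[of x z "sc (-1) * y"] ag_scal[of y z "-1"] by simp
qed

lemma fps_deriv_XN: "fps_deriv (fps_X * N) = Abs_fps (\<lambda>i. G1$i * N$i)"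
  by (simp add: fps_eq_iff G1_def ring_distribs)

lemma single:
  fixes N D :: "complex fps" and i :: bool
  defines "bb \<equiv> (if i then b1 else b2)"
  assumes N: "\<And>n. \<phi> (bb^n) = N$n" and D: "\<And>n. \<phi>' (bb^n) = D$n" and N0: "N$0 = 1"
  defines "u \<equiv> fps_inv (fps_X * N)"
  defines "x \<equiv> N oo u"
  defines "A \<equiv> E sc (inverse x) * Sub sc u bb G0 - 1"
  shows "u$0 = 0" "u$1 = 1" "u * x = fps_X" "x$0 = 1" "A$0 = 0" "ser i A"
    "(E sc x - E sc fps_X * fps_const bb) * (1 + A) = 1"
    "(1 + A) * (E sc x - E sc fps_X * fps_const bb) = 1"
    "Phi \<phi>' A = inverse x * (D oo u)"
    "Phi \<phi> (A*A) = inverse x * inverse x * (fps_deriv (fps_X * N) oo u) - 1"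
    "(fps_deriv (fps_X * N) oo u) * fps_deriv u = 1"
proof -
  define Q where "Q = Sub sc u bb G0"
  define M where "M = E sc u * fps_const bb"
  have a0: "(fps_X * N)$0 = 0" by simp
  have a1: "(fps_X * N)$1 = 1" using N0 by simp
  show u0: "u$0 = 0" by (simp add: u_def fps_inv_def)
  show u1: "u$1 = 1" using a1 by (simp add: u_def fps_inv_def)
  have comp: "(fps_X * N) oo u = fps_X" unfolding u_def by (rule fps_inv_right) (use a0 a1 in auto)
  show ux: "u * x = fps_X" using comp by (simp add: fps_compose_mult_distrib[OF u0] x_def fps_X_fps_compose_startby0[OF u0])
  show x0: "x$0 = 1" by (simp add: x_def N0)
  have xi: "inverse x * x = 1" "x * inverse x = 1" using x0 by (simp_all add: inverse_mult_eq_1 inverse_mult_eq_1')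
  have Xx: "fps_X * inverse x = u"
  proof -
    have "fps_X * inverse x = u * (x * inverse x)" by (simp add: ux[symmetric] mult.assoc)
    then show ?thesis using xi by simp
  qed
  have Ex: "E sc x * E sc (inverse x) = 1" "E sc (inverse x) * E sc x = 1"
    by (simp_all add: E_mult[OF ca, symmetric] xi E_1[OF ca])
  have Qr: "Q * (1 - M) = 1" unfolding Q_def M_def by (rule Q_inv_right[OF ca u0])
  have Ql: "(1 - M) * Q = 1" unfolding Q_def M_def by (rule Q_inv_left[OF ca u0])
  have A1: "1 + A = E sc (inverse x) * Q" by (simp add: A_def Q_def)
  have Q0: "Q$0 = 1" by (simp add: Q_def Sub_def G0_def ca_1[OF ca])
  show A0: "A$0 = 0" using x0 by (simp add: A_def Q_def[symmetric] Q0 ca_1[OF ca])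
  have NG: "Abs_fps (\<lambda>i. G0$i * \<phi> (bb^i)) = N" by (simp add: fps_eq_iff G0_def N)
  have DG: "Abs_fps (\<lambda>i. G0$i * \<phi>' (bb^i)) = D" by (simp add: fps_eq_iff G0_def D)
  have PQ: "Phi \<phi> Q = x" unfolding Q_def Phi_Sub[OF ca u0 clp] NG x_def ..
  have PQ': "Phi \<phi>' Q = D oo u" unfolding Q_def Phi_Sub[OF ca u0 clp'] DG ..
  have PA: "Phi \<phi> A = 0"
    by (simp add: A_def Phi_diff[OF ca clp] Phi_E[OF ca clp] Q_def[symmetric] PQ xi Phi_1)
  have agA: "A$n \<in> alg_gen sc bb" for n
  proof -
    have "(E sc (inverse x) * Q)$n \<in> alg_gen sc bb"
      unfolding fps_mult_nth E_nth Q_def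
      by (intro ag_sum ag_scal Sub_alg[OF ca u0])
    moreover have "(1::'a fps)$n \<in> alg_gen sc bb" by (simp add: ag_0 ag_1)
    ultimately show ?thesis unfolding A_def Q_def[symmetric] by (simp add: ag_diff)
  qed
  show "ser i A"
    unfolding ser_def cent_def AG_def
  proof
    fix n
    have "\<phi> (A$n) = 0" using PA by (simp add: fps_eq_iff)
    then show "A$n \<in> {c \<in> if i then alg_gen sc b1 else alg_gen sc b2. \<phi> c = 0}"
      using agA[of n] by (simp add: bb_def split: if_splits)
  qed
  have alpha: "E sc x - E sc fps_X * fps_const bb = E sc x * (1 - M)"
  proof -
    have "E sc x * M = E sc (x * u) * fps_const bb"
      by (simp only: M_def mult.assoc[symmetric] E_mult[OF ca])
    also have "x * u = fps_X" using ux by (simp add: mult.commute)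
    finally have "E sc x * M = E sc fps_X * fps_const bb" .
    then show ?thesis by (simp add: right_diff_distrib)
  qed
  have alpha2: "E sc x - E sc fps_X * fps_const bb = (1 - M) * E sc x"
  proof -
    have "M * E sc x = E sc x * M" by (rule E_comm[OF ca, symmetric])
    then have "(1 - M) * E sc x = E sc x * (1 - M)" by (simp add: ring_distribs)
    then show ?thesis using alpha by simp
  qed
  show "(E sc x - E sc fps_X * fps_const bb) * (1 + A) = 1"
  proof -
    have "(E sc x - E sc fps_X * fps_const bb) * (1 + A) = (1 - M) * (E sc x * E sc (inverse x)) * Q"
      unfolding alpha2 A1 by (simp add: mult.assoc)
    also have "\<dots> = 1" using Ex Ql by simp
    finally show ?thesis .
  qed
  show "(1 + A) * (E sc x - E sc fps_X * fps_const bb) = 1"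
  proof -
    have "(1 + A) * (E sc x - E sc fps_X * fps_const bb) = E sc (inverse x) * Q * (E sc x * (1 - M))"
      unfolding alpha A1 by simp
    also have "\<dots> = E sc (inverse x) * E sc x * (Q * (1 - M))"
      by (simp add: mult.assoc E_comm[OF ca, of x Q] )
      (simp add: mult.assoc[symmetric] E_comm[OF ca, of x Q])
    also have "\<dots> = 1" using Ex Qr by simp
    finally show ?thesis .
  qed
  show "Phi \<phi>' A = inverse x * (D oo u)"
    by (simp add: A_def Phi_diff[OF ca clp'] Phi_E[OF ca clp'] Q_def[symmetric] PQ' Phi'_1)
  have AA: "(1 + A) * (1 + A) = E sc (inverse x * inverse x) * Sub sc u bb G1"
  proof -
    have "(1 + A) * (1 + A) = E sc (inverse x) * (Q * E sc (inverse x)) * Q"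
      unfolding A1 by (simp add: mult.assoc)
    also have "\<dots> = E sc (inverse x * inverse x) * (Q * Q)"
      using E_comm[OF ca, of "inverse x" Q, symmetric] by (simp add: E_mult[OF ca] mult.assoc)
    also have "Q * Q = Sub sc u bb G1" unfolding Q_def by (rule QQ[OF ca u0])
    finally show ?thesis .
  qed
  have "Phi \<phi> ((1 + A) * (1 + A)) = inverse x * inverse x * (fps_deriv (fps_X * N) oo u)"
    unfolding AA Phi_E[OF ca clp] Phi_Sub[OF ca u0 clp] fps_deriv_XN
    by (simp add: N)
  moreover have "(1 + A) * (1 + A) = 1 + A + A + A * A" by (simp add: ring_distribs add.assoc)
  ultimately have "1 + Phi \<phi> (A*A) = inverse x * inverse x * (fps_deriv (fps_X * N) oo u)"
    by (simp only: Phi_add[OF ca clp] Phi_1 PA) simp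
  then show "Phi \<phi> (A*A) = inverse x * inverse x * (fps_deriv (fps_X * N) oo u) - 1"
    by (metis add_diff_cancel_left')
  show "(fps_deriv (fps_X * N) oo u) * fps_deriv u = 1"
    using arg_cong[OF comp, of fps_deriv] by (simp add: fps_compose_deriv[OF u0])
qed


lemma MK_fps: "is_inv_MK \<nu> \<tau> \<Longrightarrow> fps_deriv (fps_X * Abs_fps \<nu>) = Abs_fps \<tau> * Abs_fps \<nu>"
proof -
  assume mk: "is_inv_MK \<nu> \<tau>"
  have "fps_deriv (fps_X * Abs_fps \<nu>) $ n = (Abs_fps \<tau> * Abs_fps \<nu>) $ n" for n
  proof -
    have "fps_deriv (fps_X * Abs_fps \<nu>) $ n = of_nat (n + 1) * \<nu> n"
      by (simp only: fps_deriv_nth fps_X_mult_nth) simp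
    also have "\<dots> = (\<Sum>j\<le>n. \<tau> j * \<nu> (n - j))" using mk by (simp add: is_inv_MK_def)
    also have "\<dots> = (Abs_fps \<tau> * Abs_fps \<nu>) $ n" by (simp add: fps_mult_nth atLeast0AtMost)
    finally show ?thesis .
  qed
  then show ?thesis by (simp add: fps_eq_iff)
qed

lemma key_alg:
  fixes a b a' b' s h h1 h2 :: "complex fps"
  assumes aa: "a' = - a" and bb: "b' = - b" and ss: "(1 - a*b)*s = a' + a*b' + b' + b*a'"
    and h1: "(1+a)*h1 = 1" and h2: "(1+b)*h2 = 1" and h: "h = h1 + h2 - 1" and nz: "1 - a*b \<noteq> 0"
  shows "h * (1 - s) = 1"
proof -
  have "(1-a*b)*(1-s) = (1-a*b) - (1-a*b)*s" by (simp add: algebra_simps)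
  also have "\<dots> = (1-a*b) - (a' + a*b' + b' + b*a')" by (simp only: ss)
  also have "\<dots> = (1+a)*(1+b)" by (simp add: aa bb algebra_simps)
  finally have e: "(1-a*b)*(1-s) = (1+a)*(1+b)" .
  have "h*((1+a)*(1+b)) = ((1+a)*h1)*(1+b) + ((1+b)*h2)*(1+a) - (1+a)*(1+b)"
    by (simp add: h algebra_simps)
  also have "\<dots> = (1+b) + (1+a) - (1+a)*(1+b)" by (simp only: h1 h2 mult_1_left)
  also have "\<dots> = 1 - a*b" by (simp add: algebra_simps)
  finally have f: "h*((1+a)*(1+b)) = 1 - a*b" .
  have "(1-a*b) * (h*(1-s)) = h * ((1-a*b)*(1-s))" by (simp add: algebra_simps)
  also have "\<dots> = (1-a*b) * 1" using e f by simp
  finally show ?thesis using nz by (metis mult_left_cancel)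
qed

lemma ring_lemma:
  fixes \<alpha> \<beta> A B :: "'b::ring_1"
  assumes "\<alpha> * (1 + A) = 1" "(1 + A) * \<alpha> = 1" "\<beta> * (1 + B) = 1" "(1 + B) * \<beta> = 1"
  shows "\<alpha> + \<beta> - 1 = \<alpha> * (1 - A * B) * \<beta>"
proof -
  have aA: "\<alpha> * A = 1 - \<alpha>" using assms(1) by (simp add: ring_distribs eq_diff_eq add.commute)
  have Bb: "B * \<beta> = 1 - \<beta>" using assms(4) by (simp add: ring_distribs eq_diff_eq add.commute)
  have "\<alpha> * (1 - A * B) * \<beta> = \<alpha> * \<beta> - (\<alpha> * A) * (B * \<beta>)" by (simp add: ring_distribs mult.assoc)
  also have "\<dots> = \<alpha> * \<beta> - (1 - \<alpha>) * (1 - \<beta>)" by (simp only: aA Bb)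
  also have "\<dots> = \<alpha> + \<beta> - 1" by (simp add: ring_distribs)
  finally show ?thesis by simp
qed


lemma single_full:
  fixes \<mu>1 \<tau>1 :: "nat \<Rightarrow> complex" and i :: bool
  defines "bb \<equiv> (if i then b1 else b2)"
  assumes m: "\<And>n. \<phi> (bb^n) = \<mu>1 n" and d: "\<And>n. \<phi>' (bb^n) = \<mu>1 n - \<tau>1 n" and mk: "is_inv_MK \<mu>1 \<tau>1"
  defines "N \<equiv> Abs_fps \<mu>1"
  defines "u \<equiv> fps_inv (fps_X * N)"
  defines "x \<equiv> N oo u"
  defines "A \<equiv> E sc (inverse x) * Sub sc u bb G0 - 1"
  shows "u$0 = 0" "u * x = fps_X" "x$0 = 1" "A$0 = 0" "ser i A"
    "(E sc x - E sc fps_X * fps_const bb) * (1 + A) = 1"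
    "(1 + A) * (E sc x - E sc fps_X * fps_const bb) = 1"
    "Phi \<phi>' A = - Phi \<phi> (A*A)"
    "(1 + Phi \<phi> (A*A)) * (x - fps_X * fps_deriv x) = 1"
proof -
  have N: "\<And>n. \<phi> (bb^n) = N$n" by (simp add: N_def m)
  define D where "D = Abs_fps (\<lambda>n. \<mu>1 n - \<tau>1 n)"
  have D: "\<And>n. \<phi>' (bb^n) = D$n" by (simp add: D_def d)
  have N0: "N$0 = 1" using N[of 0] by (simp add: phi1)
  note S = single[of i N D, OF N[unfolded bb_def] D[unfolded bb_def] N0]
  show u0: "u$0 = 0" unfolding u_def by (fact S(1))
  show ux: "u * x = fps_X" unfolding x_def u_def by (fact S(3))
  show x0: "x$0 = 1" unfolding x_def u_def by (fact S(4))
  show "A$0 = 0" unfolding A_def x_def u_def bb_def by (fact S(5))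
  show "ser i A" unfolding A_def x_def u_def bb_def by (fact S(6))
  show "(E sc x - E sc fps_X * fps_const bb) * (1 + A) = 1"
    unfolding A_def x_def u_def bb_def by (fact S(7))
  show "(1 + A) * (E sc x - E sc fps_X * fps_const bb) = 1"
    unfolding A_def x_def u_def bb_def by (fact S(8))
  have S9: "Phi \<phi>' A = inverse x * (D oo u)" unfolding A_def x_def u_def bb_def by (fact S(9))
  have S10: "Phi \<phi> (A*A) = inverse x * inverse x * (fps_deriv (fps_X * N) oo u) - 1"
    unfolding A_def x_def u_def bb_def by (fact S(10))
  have S11: "(fps_deriv (fps_X * N) oo u) * fps_deriv u = 1"
    unfolding u_def by (fact S(11))
  define T where "T = Abs_fps \<tau>1"
  have dW: "fps_deriv (fps_X * N) = T * N" unfolding N_def T_def by (rule MK_fps[OF mk])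
  have DNT: "D = N - T" by (simp add: fps_eq_iff D_def N_def T_def)
  define d1 where "d1 = D oo u"
  have dWu: "fps_deriv (fps_X * N) oo u = (x - d1) * x"
    unfolding dW DNT d1_def x_def
    by (simp add: fps_compose_mult_distrib[OF u0] fps_compose_sub_distrib)
  have xi: "inverse x * x = 1" using x0 by (simp add: inverse_mult_eq_1)
  have a': "Phi \<phi>' A = inverse x * d1" using S9 by (simp add: d1_def)
  have "Phi \<phi> (A*A) = inverse x * inverse x * ((x - d1) * x) - 1" using S10 dWu by simp
  also have "\<dots> = inverse x * (x - d1) * (inverse x * x) - 1"
    by (simp only: mult_ac)
  also have "\<dots> = inverse x * (x - d1) - 1" using xi by simp
  finally have a: "Phi \<phi> (A*A) = inverse x * (x - d1) - 1" .
  show "Phi \<phi>' A = - Phi \<phi> (A*A)"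
    unfolding a a' using xi by (simp add: algebra_simps)
  have ch: "((x - d1) * x) * fps_deriv u = 1" using S11 dWu by simp
  have du: "fps_deriv u * x * x = x - fps_X * fps_deriv x"
  proof -
    have "fps_deriv (u * x) = 1" using ux by simp
    then have "fps_deriv u * x + u * fps_deriv x = 1" by (simp add: fps_deriv_mult add.commute)
    then have "(fps_deriv u * x + u * fps_deriv x) * x = x" by simp
    then have "fps_deriv u * x * x = x - (u * x) * fps_deriv x" by (simp add: algebra_simps)
    then show ?thesis using ux by simp
  qed
  have "(1 + Phi \<phi> (A*A)) * (x - fps_X * fps_deriv x) = inverse x * (x - d1) * (fps_deriv u * x * x)"
    unfolding a du by simp
  also have "\<dots> = (inverse x * x) * (((x - d1) * x) * fps_deriv u)" by (simp add: algebra_simps)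
  also have "\<dots> = 1" using xi ch by simp
  finally show "(1 + Phi \<phi> (A*A)) * (x - fps_X * fps_deriv x) = 1" .
qed


lemma main_Z:
  fixes \<mu>1 \<tau>1 \<mu>2 \<tau>2 \<mu> \<tau> :: "nat \<Rightarrow> complex"
  assumes m1: "\<And>n. \<phi> (b1^n) = \<mu>1 n" and d1: "\<And>n. \<phi>' (b1^n) = \<mu>1 n - \<tau>1 n" and mk1: "is_inv_MK \<mu>1 \<tau>1"
    and m2: "\<And>n. \<phi> (b2^n) = \<mu>2 n" and d2: "\<And>n. \<phi>' (b2^n) = \<mu>2 n - \<tau>2 n" and mk2: "is_inv_MK \<mu>2 \<tau>2"
    and m: "\<And>n. \<phi> ((b1+b2)^n) = \<mu> n" and mk: "is_inv_MK \<mu> \<tau>"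
  shows "\<phi>' ((b1+b2)^n) = \<mu> n - \<tau> n"
proof -
  define u1 where "u1 = fps_inv (fps_X * Abs_fps \<mu>1)"
  define x where "x = Abs_fps \<mu>1 oo u1"
  define A where "A = E sc (inverse x) * Sub sc u1 b1 G0 - 1"
  define u2 where "u2 = fps_inv (fps_X * Abs_fps \<mu>2)"
  define y where "y = Abs_fps \<mu>2 oo u2"
  define B where "B = E sc (inverse y) * Sub sc u2 b2 G0 - 1"
  note F1 = single_full[of True \<mu>1 \<tau>1, unfolded if_True, OF m1 d1 mk1, folded u1_def, folded x_def, folded A_def]
  note F2 = single_full[of False \<mu>2 \<tau>2, unfolded if_False, OF m2 d2 mk2, folded u2_def, folded y_def, folded B_def]
  define \<alpha> where "\<alpha> = E sc x - E sc fps_X * fps_const b1"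
  define \<beta> where "\<beta> = E sc y - E sc fps_X * fps_const b2"
  have al: "\<alpha> * (1 + A) = 1" "(1 + A) * \<alpha> = 1" using F1 by (simp_all add: \<alpha>_def)
  have be: "\<beta> * (1 + B) = 1" "(1 + B) * \<beta> = 1" using F2 by (simp_all add: \<beta>_def)
  define a where "a = Phi \<phi> (A*A)"
  define b where "b = Phi \<phi> (B*B)"
  have aa: "Phi \<phi>' A = - a" using F1 by (simp add: a_def)
  have bb: "Phi \<phi>' B = - b" using F2 by (simp add: b_def)
  define h1 where "h1 = x - fps_X * fps_deriv x"
  define h2 where "h2 = y - fps_X * fps_deriv y"
  have ha: "(1 + a) * h1 = 1" using F1 by (simp add: a_def h1_def)
  have hb: "(1 + b) * h2 = 1" using F2 by (simp add: b_def h2_def)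
  have x0: "x$0 = 1" and y0: "y$0 = 1" using F1 F2 by simp_all
  define p where "p = x + y - 1"
  have p0: "p$0 = 1" using x0 y0 by (simp add: p_def)
  define u where "u = fps_X * inverse p"
  have pi: "inverse p * p = 1" using p0 by (simp add: inverse_mult_eq_1)
  have u0: "u$0 = 0" by (simp add: u_def)
  have u1: "u$1 = 1" using p0 by (simp add: u_def)
  have up: "u * p = fps_X" using pi by (simp add: u_def mult.assoc)
  define Z where "Z = b1 + b2"
  define M where "M = E sc u * fps_const Z"
  define Q where "Q = Sub sc u Z G0"
  define S where "S = geom (A * B)"
  define K where "K = E sc p * ((1 + B) * S * (1 + A))"
  have A0: "A$0 = 0" and B0: "B$0 = 0" using F1 F2 by simp_all
  have serA: "ser True A" and serB: "ser False B" using F1 F2 by simp_all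
  have MEp: "(1 - M) * E sc p = \<alpha> + \<beta> - 1"
  proof -
    have "M * E sc p = E sc u * (fps_const Z * E sc p)" by (simp add: M_def mult.assoc)
    also have "fps_const Z * E sc p = E sc p * fps_const Z" by (rule E_comm[OF ca, symmetric])
    also have "E sc u * (E sc p * fps_const Z) = E sc (u * p) * fps_const Z"
      by (simp add: E_mult[OF ca] mult.assoc)
    finally have "M * E sc p = E sc fps_X * fps_const Z" using up by simp
    also have "\<dots> = E sc fps_X * fps_const b1 + E sc fps_X * fps_const b2"
      by (simp add: Z_def ring_distribs flip: fps_const_add)
    finally have e1: "M * E sc p = E sc fps_X * fps_const b1 + E sc fps_X * fps_const b2" .
    have e2: "E sc p = E sc x + E sc y - 1"
      by (simp add: p_def E_diff[OF ca] E_add[OF ca] E_1[OF ca])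
    have "(1 - M) * E sc p = E sc p - M * E sc p" by (simp add: left_diff_distrib)
    also have "\<dots> = (E sc x + E sc y - 1) - (E sc fps_X * fps_const b1 + E sc fps_X * fps_const b2)"
      by (subst e1, subst e2, rule refl)
    also have "\<dots> = \<alpha> + \<beta> - 1" by (simp add: \<alpha>_def \<beta>_def algebra_simps)
    finally show ?thesis .
  qed
  have geomS: "(1 - A * B) * S = 1" unfolding S_def by (rule geom_inv_left) (simp add: A0)
  have MK: "(1 - M) * K = 1"
  proof -
    have "(1 - M) * K = ((1 - M) * E sc p) * ((1 + B) * S * (1 + A))" by (simp add: K_def mult.assoc)
    also have "\<dots> = \<alpha> * (1 - A * B) * (\<beta> * (1 + B)) * S * (1 + A)"
      unfolding MEp ring_lemma[OF al be] by (simp add: mult.assoc)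
    also have "\<dots> = \<alpha> * ((1 - A * B) * S) * (1 + A)" using be by (simp add: mult.assoc)
    also have "\<dots> = 1" using geomS al by simp
    finally show ?thesis .
  qed
  have QK: "Q = K"
  proof -
    have "Q = Q * ((1 - M) * K)" using MK by simp
    also have "\<dots> = (Q * (1 - M)) * K" by (simp add: mult.assoc)
    also have "Q * (1 - M) = 1" unfolding Q_def M_def by (rule Q_inv_right[OF ca u0])
    finally show ?thesis by simp
  qed
  define N where "N = Abs_fps \<mu>"
  define D where "D = Abs_fps (\<lambda>n. \<phi>' (Z^n))"
  define T where "T = Abs_fps \<tau>"
  have NG: "Abs_fps (\<lambda>i. G0$i * \<phi> (Z^i)) = N" by (simp add: fps_eq_iff G0_def N_def Z_def m)
  have DG: "Abs_fps (\<lambda>i. G0$i * \<phi>' (Z^i)) = D" by (simp add: fps_eq_iff G0_def D_def)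
  note FM = free_main[OF serA serB A0 B0, folded S_def]
  have Nu: "N oo u = p"
  proof -
    have "N oo u = Phi \<phi> Q" unfolding Q_def Phi_Sub[OF ca u0 clp] NG ..
    also have "\<dots> = p" unfolding QK K_def Phi_E[OF ca clp] FM(1) by simp
    finally show ?thesis .
  qed
  define sv where "sv = Phi \<phi>' ((1 + B) * S * (1 + A))"
  have Du: "D oo u = p * sv"
  proof -
    have "D oo u = Phi \<phi>' Q" unfolding Q_def Phi_Sub[OF ca u0 clp'] DG ..
    also have "\<dots> = p * sv" unfolding QK K_def Phi_E[OF ca clp'] sv_def ..
    finally show ?thesis .
  qed
  have svq: "(1 - a * b) * sv = - a + a * - b + - b + b * - a"
    using FM(2) unfolding aa bb a_def[symmetric] b_def[symmetric] sv_def .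
  define h where "h = p - fps_X * fps_deriv p"
  have hh: "h = h1 + h2 - 1" by (simp add: h_def h1_def h2_def p_def algebra_simps fps_deriv_add)
  have nz: "1 - a * b \<noteq> 0"
  proof -
    have "(A*A)$0 = 0" "(B*B)$0 = 0" using A0 B0 by simp_all
    then have "a$0 = 0" "b$0 = 0" by (simp_all add: a_def b_def cl_0[OF clp])
    then have "(1 - a * b)$0 = 1" by simp
    then show ?thesis by (metis one_neq_zero fps_zero_nth)
  qed
  have hs: "h * (1 - sv) = 1"
    by (rule key_alg[OF refl refl svq ha hb hh nz])
  have du: "fps_deriv u * p * p = h"
  proof -
    have "fps_deriv (u * p) = 1" using up by simp
    then have "fps_deriv u * p + u * fps_deriv p = 1" by (simp add: fps_deriv_mult add.commute)
    then have "(fps_deriv u * p + u * fps_deriv p) * p = p" by simp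
    then have "fps_deriv u * p * p = p - (u * p) * fps_deriv p" by (simp add: algebra_simps)
    then show ?thesis using up by (simp add: h_def)
  qed
  define dW where "dW = fps_deriv (fps_X * N)"
  have chain: "(dW oo u) * fps_deriv u = 1"
  proof -
    have "(fps_X * N) oo u = fps_X"
      using up Nu by (simp add: fps_compose_mult_distrib[OF u0] fps_X_fps_compose_startby0[OF u0])
    then have "fps_deriv ((fps_X * N) oo u) = 1" by simp
    then show ?thesis by (simp add: fps_compose_deriv[OF u0] dW_def)
  qed
  have other: "(p * p - (p * sv) * p) * fps_deriv u = 1"
  proof -
    have "(p * p - (p * sv) * p) * fps_deriv u = (fps_deriv u * p * p) * (1 - sv)" by (simp add: algebra_simps)
    also have "\<dots> = 1" using du hs by simp
    finally show ?thesis .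
  qed
  have du0: "fps_deriv u \<noteq> 0"
  proof -
    have "fps_deriv u $ 0 = 1" using u1 by simp
    then show ?thesis by (metis one_neq_zero fps_zero_nth)
  qed
  have "dW oo u = p * p - (p * sv) * p"
    using chain other du0 by (metis mult_right_cancel)
  also have "\<dots> = (N * N - D * N) oo u"
    by (simp add: fps_compose_sub_distrib fps_compose_mult_distrib[OF u0] Nu Du)
  finally have "dW = N * N - D * N" using fps_compose_inj_right[OF u0] u1 by simp
  moreover have "dW = T * N" unfolding dW_def N_def T_def by (rule MK_fps[OF mk])
  ultimately have "(N - T - D) * N = 0" by (simp add: algebra_simps)
  moreover have "N \<noteq> 0"
  proof -
    have "N $ 0 = 1" using m[of 0] by (simp add: N_def phi1)
    then show ?thesis by (metis one_neq_zero fps_zero_nth)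
  qed
  ultimately have "D = N - T" by simp
  then have "D $ n = (N - T) $ n" by simp
  then show ?thesis by (simp add: D_def N_def T_def Z_def)
qed

end



theorem proposition5p5:
  fixes sc :: "complex \<Rightarrow> 'a::ring_1" and \<phi> \<phi>' :: "'a \<Rightarrow> complex" and b1 b2 :: 'a
    and \<mu>1 \<mu>2 \<tau>1 \<tau>2 \<mu> \<tau> :: "nat \<Rightarrow> complex"
  assumes "\<mu>1 0 = 1" and "\<mu>2 0 = 1"
    and "is_inv_MK \<mu>1 \<tau>1" and "is_inv_MK \<mu>2 \<tau>2"
    and "inf_ncps sc \<phi> \<phi>'"
    and "inf_free sc \<phi> \<phi>' UNIV (\<lambda>i::bool. if i then alg_gen sc b1 else alg_gen sc b2)"
    and "distr \<phi> b1 = \<mu>1" and "distr \<phi>' b1 = (\<lambda>n. \<mu>1 n - \<tau>1 n)"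
    and "distr \<phi> b2 = \<mu>2" and "distr \<phi>' b2 = (\<lambda>n. \<mu>2 n - \<tau>2 n)"
    and "\<mu> = distr \<phi> (b1 + b2)"
    and "is_inv_MK \<mu> \<tau>"
  shows "distr \<phi> (b1 + b2) = \<mu> \<and> distr \<phi>' (b1 + b2) = (\<lambda>n. \<mu> n - \<tau> n)"
proof -
  interpret infsetup sc \<phi> \<phi>' b1 b2
    using assms(5,6) by unfold_locales
  have m1: "\<phi> (b1^n) = \<mu>1 n" for n using fun_cong[OF assms(7), of n] by (simp add: distr_def)
  have d1: "\<phi>' (b1^n) = \<mu>1 n - \<tau>1 n" for n using fun_cong[OF assms(8), of n] by (simp add: distr_def)
  have m2: "\<phi> (b2^n) = \<mu>2 n" for n using fun_cong[OF assms(9), of n] by (simp add: distr_def)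
  have d2: "\<phi>' (b2^n) = \<mu>2 n - \<tau>2 n" for n using fun_cong[OF assms(10), of n] by (simp add: distr_def)
  have m: "\<phi> ((b1+b2)^n) = \<mu> n" for n using fun_cong[OF assms(11), of n] by (simp add: distr_def)
  have "\<phi>' ((b1+b2)^n) = \<mu> n - \<tau> n" for n
    by (rule main_Z[OF m1 d1 assms(3) m2 d2 assms(4) m assms(12)])
  then show ?thesis using assms(11) by (simp add: distr_def fun_eq_iff)
qed

end
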